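(* If $H\in\mathcal{H}_-$, then $H_{L_H^{**}}(x,y)\le -H_{L_H^{**}}(y,x)$ for all $x,y\in\bar\Omega$; that is, the restriction of $H_{L_H^{**}}$ to $\bar\Omega\times\bar\Omega$ belongs to $\mathcal{H}_-$.
   Context: $\Omega\subset\mathbb{R}^N$ is a bounded domain with $\bar\Omega\subset B_R$, the ball of radius $R>0$ centered at the origin. $\mathcal{H}_-$ is the set of continuous $H$ on $\bar\Omega\times\bar\Omega$ with $H(x,y)\le -H(y,x)$ for all $x,y$. For such $H$: $L_H(x,p)=\sup_{y\in\bar\Omega}\{\langle y,p\rangle-H(y,x)\}$; $L_H^*(q,y)=\sup_{x\in\bar\Omega,\,p\in B_R}\{\langle y,p\rangle+\langle q,x\rangle-L_H(x,p)\}$; $L_H^{**}(y,q)=\sup_{x\in\bar\Omega,\,p\in B_R}\{\langle y,p\rangle+\langle q,x\rangle-L_H^*(p,x)\}$. For a function $L$ on $\mathbb{R}^N\times\mathbb{R}^N$, $H_L(x,y)=\sup_{p\in B_R}\{\langle x,p\rangle-L(y,p)\}$. *)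

theory Defs
  imports "HOL-Analysis.Analysis"
begin

text \<open>Oc plays the role of the closure of Omega; ball 0 R is B_R.\<close>

definition Hminus :: "'a::euclidean_space set \<Rightarrow> ('a \<Rightarrow> 'a \<Rightarrow> real) set" where
  "Hminus Oc = {H. continuous_on (Oc \<times> Oc) (\<lambda>(x, y). H x y) \<and>
                  (\<forall>x\<in>Oc. \<forall>y\<in>Oc. H x y \<le> - H y x)}"

definition L_H :: "'a::euclidean_space set \<Rightarrow> ('a \<Rightarrow> 'a \<Rightarrow> real) \<Rightarrow> 'a \<Rightarrow> 'a \<Rightarrow> real" where
  "L_H Oc H x p = (SUP y\<in>Oc. inner y p - H y x)"

definition L_H_star :: "'a::euclidean_space set \<Rightarrow> real \<Rightarrow> ('a \<Rightarrow> 'a \<Rightarrow> real) \<Rightarrow> 'a \<Rightarrow> 'a \<Rightarrow> real" where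
  "L_H_star Oc R H q y = (SUP (x, p)\<in>Oc \<times> ball 0 R. inner y p + inner q x - L_H Oc H x p)"

definition L_H_star2 :: "'a::euclidean_space set \<Rightarrow> real \<Rightarrow> ('a \<Rightarrow> 'a \<Rightarrow> real) \<Rightarrow> 'a \<Rightarrow> 'a \<Rightarrow> real" where
  "L_H_star2 Oc R H y q = (SUP (x, p)\<in>Oc \<times> ball 0 R. inner y p + inner q x - L_H_star Oc R H p x)"

definition H_L :: "real \<Rightarrow> ('a::euclidean_space \<Rightarrow> 'a \<Rightarrow> real) \<Rightarrow> 'a \<Rightarrow> 'a \<Rightarrow> real" where
  "H_L R L x y = (SUP p\<in>ball 0 R. inner x p - L y p)"

end

theory Submission
  imports Defs
begin

lemma core:
  fixes K :: "'a::euclidean_space set" and R M :: real and H :: "'a \<Rightarrow> 'a \<Rightarrow> real"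
  assumes Kne: "K \<noteq> {}" and R: "R > 0" and KR: "K \<subseteq> ball 0 R"
    and M: "\<And>u v. u \<in> K \<Longrightarrow> v \<in> K \<Longrightarrow> \<bar>H u v\<bar> \<le> M"
    and Hm: "\<And>u v. u \<in> K \<Longrightarrow> v \<in> K \<Longrightarrow> H u v \<le> - H v u"
    and x: "x \<in> K" and y: "y \<in> K"
  shows "H_L R (L_H_star2 K R H) x y \<le> - H_L R (L_H_star2 K R H) y x"
proof -
  have nK: "\<And>u. u \<in> K \<Longrightarrow> norm u < R" using KR by auto
  have ip: "\<And>u v. inner u v \<le> norm u * norm v"
    by (metis Cauchy_Schwarz_ineq2 abs_le_D1)
  have ia: "\<And>u v. \<bar>inner u v\<bar> \<le> norm u * norm v"
    by (simp add: Cauchy_Schwarz_ineq2)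
  have RR: "\<bar>inner u v\<bar> \<le> R * R" if "norm u < R" "norm v < R" for u v :: 'a
  proof -
    have "norm u * norm v \<le> R * R" using R that by (intro mult_mono) auto
    then show ?thesis using ia[of u v] by linarith
  qed
  let ?L = "L_H K H" and ?Ls = "L_H_star K R H" and ?G = "L_H_star2 K R H"
  have Lbdd: "bdd_above ((\<lambda>y. inner y p - H y a) ` K)" if a: "a \<in> K" for a p
  proof (rule bdd_aboveI2)
    fix u assume u: "u \<in> K"
    have "inner u p \<le> norm u * norm p" by (rule ip)
    also have "\<dots> \<le> R * norm p" using nK[OF u] by (intro mult_right_mono) auto
    finally show "inner u p - H u a \<le> R * norm p + M" using M[OF u a] by linarith
  qed
  have Lge: "?L a p \<ge> inner u p - H u a" if "a \<in> K" "u \<in> K" for a u p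
    unfolding L_H_def using Lbdd[OF that(1)] that(2) by (rule cSUP_upper2) auto
  have Lle: "?L a 0 \<le> M" if a: "a \<in> K" for a
    unfolding L_H_def
  proof (rule cSUP_least[OF Kne])
    fix u assume "u \<in> K" then show "inner u 0 - H u a \<le> M" using M[of u a] a by simp
  qed
  have Lselt: "inner x' b + inner p' a - ?L a b \<le> ?L x' p'"
    if "x' \<in> K" "a \<in> K" for x' p' a b
    using Lge[OF that(2,1), of b] Lge[OF that, of p'] Hm[OF that] that
    by (simp add: inner_commute)
  have Lsbdd: "bdd_above ((\<lambda>(a, b). inner x' b + inner p' a - ?L a b) ` (K \<times> ball 0 R))"
    if "x' \<in> K" for x' p'
    by (rule bdd_aboveI2[where M="?L x' p'"]) (use Lselt that in auto)
  have Lsle: "?Ls p' x' \<le> ?L x' p'" if "x' \<in> K" for x' p'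
    unfolding L_H_star_def
    by (rule cSUP_least) (use Kne R Lselt that in auto)
  have Lsge: "?Ls p' x' \<ge> - R * R - M" if "x' \<in> K" "norm p' < R" for x' p'
  proof -
    obtain a where a: "a \<in> K" using Kne by auto
    have "?Ls p' x' \<ge> inner x' 0 + inner p' a - ?L a 0"
      unfolding L_H_star_def
      by (rule cSUP_upper2[OF Lsbdd[OF that(1)], of "(a, 0)"]) (use a R in auto)
    moreover have "\<bar>inner p' a\<bar> \<le> R * R" using RR[of p' a] that nK[OF a] by auto
    ultimately show ?thesis using Lle[OF a] by simp
  qed
  have Gbdd: "bdd_above ((\<lambda>(a, b). inner z b + inner q a - ?Ls b a) ` (K \<times> ball 0 R))"
    for z q
  proof (rule bdd_aboveI2)
    fix ab :: "'a \<times> 'a" assume "ab \<in> K \<times> ball 0 R"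
    then obtain a b where ab: "ab = (a, b)" "a \<in> K" "norm b < R" by auto
    have "inner z b \<le> norm z * norm b" by (rule ip)
    also have "\<dots> \<le> norm z * R" using ab by (intro mult_left_mono) auto
    finally have 1: "inner z b \<le> norm z * R" .
    have "inner q a \<le> norm q * norm a" by (rule ip)
    also have "\<dots> \<le> norm q * R" using ab nK[of a] by (intro mult_left_mono) auto
    finally have 2: "inner q a \<le> norm q * R" .
    show "(\<lambda>(a, b). inner z b + inner q a - ?Ls b a) ab \<le> norm z * R + norm q * R + R * R + M"
      using 1 2 Lsge[of a b] ab by auto
  qed
  have Gge: "?G z q \<ge> inner z b + inner q a - ?Ls b a" if "a \<in> K" "norm b < R" for z q a b
    unfolding L_H_star2_def
    by (rule cSUP_upper2[OF Gbdd, of "(a, b)"]) (use that in auto)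
  have GLs: "?Ls q z \<le> ?G z q" if "z \<in> K" for z q
    unfolding L_H_star_def
  proof (rule cSUP_least)
    show "K \<times> ball 0 R \<noteq> {}" using Kne R by auto
  next
    fix ab :: "'a \<times> 'a" assume "ab \<in> K \<times> ball 0 R"
    then obtain a b where ab: "ab = (a, b)" "a \<in> K" "norm b < R" by auto
    show "(\<lambda>(a, b). inner z b + inner q a - ?L a b) ab \<le> ?G z q"
      using Gge[of a b z q] Lsle[of a b] ab by auto
  qed
  have key: "?G y p + ?G x q \<ge> inner x p + inner y q" if "norm p < R" "norm q < R" for p q
    using Gge[of x q y p] GLs[of x q] x that by (simp add: inner_commute)
  have bne: "ball (0::'a) R \<noteq> {}" using R by auto
  have "H_L R ?G y x \<le> ?G y p - inner x p" if p: "norm p < R" for p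
    unfolding H_L_def
    by (rule cSUP_least[OF bne]) (use key[OF p] in \<open>fastforce simp: algebra_simps\<close>)
  then show ?thesis
    unfolding H_L_def[of R ?G x y]
    by (intro cSUP_least[OF bne]) (fastforce simp: algebra_simps)
qed

theorem lemma2p4:
  fixes \<Omega> :: "'a::euclidean_space set" and R :: real and H :: "'a \<Rightarrow> 'a \<Rightarrow> real"
  assumes "open \<Omega>" and "connected \<Omega>" and "\<Omega> \<noteq> {}" and "bounded \<Omega>"
    and "R > 0" and "closure \<Omega> \<subseteq> ball 0 R"
    and "H \<in> Hminus (closure \<Omega>)"
  shows "\<forall>x\<in>closure \<Omega>. \<forall>y\<in>closure \<Omega>.
           H_L R (L_H_star2 (closure \<Omega>) R H) x y \<le> - H_L R (L_H_star2 (closure \<Omega>) R H) y x"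
proof -
  let ?K = "closure \<Omega>"
  have cK: "compact ?K" using assms(4) by (simp add: compact_closure)
  have cont: "continuous_on (?K \<times> ?K) (\<lambda>(x, y). H x y)" and Hm: "\<forall>x\<in>?K. \<forall>y\<in>?K. H x y \<le> - H y x"
    using assms(7) by (auto simp: Hminus_def)
  have "compact ((\<lambda>(x, y). H x y) ` (?K \<times> ?K))"
    using cK cont by (intro compact_continuous_image compact_Times) auto
  then obtain M where M: "\<forall>z\<in>(\<lambda>(x, y). H x y) ` (?K \<times> ?K). norm z \<le> M"
    using compact_imp_bounded bounded_iff by metis
  have M': "\<bar>H u v\<bar> \<le> M" if "u \<in> ?K" "v \<in> ?K" for u v
    using M that by force
  show ?thesis
    using core[of ?K R H M] assms(3,5,6) M' Hm by auto
qed

end
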